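(* Consider an instance of rooted $k$-robust Steiner tree on an undirected graph $G=(V,E)$ with edge costs $c$, root $r$ and terminal set $U\subseteq V$, a threshold $T\ge0$, and a constant $\beta>2$. Let $S$ be constructed by starting with $S=\{r\}$ and, while some terminal $v\in U$ has $d(v,S)>\beta\frac{T}{k}$, adding such a $v$ to $S$; let $\Phi_T$ be a minimum spanning tree on $S$ (with respect to shortest-path distances, realized by the corresponding shortest paths). Let $\Phi^*$ and $T^*$ denote the first-stage cost and second-stage cost of an optimal solution of the $k$-robust instance. If $T\ge T^*$ then $c(\Phi_T)\le\frac{2\beta}{\beta-2}\cdot\Phi^*+2\cdot T^*$.
   Context: $d$ is the shortest-path distance in $G$ and $d(v,S)=\min_{w\in S}d(v,w)$. Rooted $k$-robust Steiner tree: inflation $\lambda\ge1$, integer $k\ge1$; a feasible solution is a first-stage edge set $E_0$ and, for each $D\subseteq U$ with $|D|=k$, an edge set $E_D$ such that $E_0\cup E_D$ connects every terminal of $D$ to $r$; its cost is $c(E_0)+\lambda\max_Dc(E_D)$, with first-stage cost $c(E_0)$ and second-stage cost $\max_Dc(E_D)$. *)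

theory Defs
  imports Complex_Main
begin

definition graph :: "'a set \<Rightarrow> 'a set set \<Rightarrow> bool" where
  "graph V E \<longleftrightarrow> finite V \<and> (\<forall>e\<in>E. e \<subseteq> V \<and> card e = 2)"

definition adj :: "'a set set \<Rightarrow> ('a \<times> 'a) set" where
  "adj F = {(x, y). {x, y} \<in> F}"

definition walk :: "'a set set \<Rightarrow> 'a list \<Rightarrow> bool" where
  "walk F xs \<longleftrightarrow> xs \<noteq> [] \<and> (\<forall>(x, y)\<in>set (zip xs (tl xs)). {x, y} \<in> F)"

definition walk_cost :: "('a set \<Rightarrow> real) \<Rightarrow> 'a list \<Rightarrow> real" where
  "walk_cost c xs = sum_list (map (\<lambda>(x, y). c {x, y}) (zip xs (tl xs)))"

definition spdist :: "'a set set \<Rightarrow> ('a set \<Rightarrow> real) \<Rightarrow> 'a \<Rightarrow> 'a \<Rightarrow> real" where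
  "spdist E c u v = Inf {walk_cost c xs | xs. walk E xs \<and> hd xs = u \<and> last xs = v}"

definition spdist_set :: "'a set set \<Rightarrow> ('a set \<Rightarrow> real) \<Rightarrow> 'a \<Rightarrow> 'a set \<Rightarrow> real" where
  "spdist_set E c v S = Min ((\<lambda>w. spdist E c v w) ` S)"

definition scenarios :: "'a set \<Rightarrow> nat \<Rightarrow> 'a set set" where
  "scenarios U k = {D. D \<subseteq> U \<and> card D = k}"

definition robust_feasible ::
  "'a set set \<Rightarrow> 'a \<Rightarrow> 'a set \<Rightarrow> nat \<Rightarrow> 'a set set \<Rightarrow> ('a set \<Rightarrow> 'a set set) \<Rightarrow> bool" where
  "robust_feasible E r U k E0 ED \<longleftrightarrow> E0 \<subseteq> E \<and>
     (\<forall>D\<in>scenarios U k. ED D \<subseteq> E \<and> (\<forall>v\<in>D. (v, r) \<in> (adj (E0 \<union> ED D))\<^sup>*))"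

definition first_stage_cost :: "('a set \<Rightarrow> real) \<Rightarrow> 'a set set \<Rightarrow> real" where
  "first_stage_cost c E0 = (\<Sum>e\<in>E0. c e)"

definition second_stage_cost ::
  "('a set \<Rightarrow> real) \<Rightarrow> 'a set \<Rightarrow> nat \<Rightarrow> ('a set \<Rightarrow> 'a set set) \<Rightarrow> real" where
  "second_stage_cost c U k ED = Max ((\<lambda>D. \<Sum>e\<in>ED D. c e) ` scenarios U k)"

definition robust_cost ::
  "('a set \<Rightarrow> real) \<Rightarrow> 'a set \<Rightarrow> nat \<Rightarrow> real \<Rightarrow> 'a set set \<Rightarrow> ('a set \<Rightarrow> 'a set set) \<Rightarrow> real" where
  "robust_cost c U k lam E0 ED = first_stage_cost c E0 + lam * second_stage_cost c U k ED"

definition robust_optimal ::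
  "'a set set \<Rightarrow> ('a set \<Rightarrow> real) \<Rightarrow> 'a \<Rightarrow> 'a set \<Rightarrow> nat \<Rightarrow> real
    \<Rightarrow> 'a set set \<Rightarrow> ('a set \<Rightarrow> 'a set set) \<Rightarrow> bool" where
  "robust_optimal E c r U k lam E0 ED \<longleftrightarrow> robust_feasible E r U k E0 ED \<and>
     (\<forall>E0' ED'. robust_feasible E r U k E0' ED' \<longrightarrow>
        robust_cost c U k lam E0 ED \<le> robust_cost c U k lam E0' ED')"

text \<open>ss lists the vertices of S in the order they were added: starting with r,
  each added vertex is a terminal at distance > beta*T/k from the previously chosen
  ones, and the process stops when every terminal is within beta*T/k of S.\<close>
definition greedy_net_run ::
  "'a set set \<Rightarrow> ('a set \<Rightarrow> real) \<Rightarrow> 'a \<Rightarrow> 'a set \<Rightarrow> real \<Rightarrow> 'a list \<Rightarrow> bool" where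
  "greedy_net_run E c r U \<delta> ss \<longleftrightarrow> ss \<noteq> [] \<and> hd ss = r \<and>
     (\<forall>i\<in>{1..<length ss}. ss ! i \<in> U \<and> spdist_set E c (ss ! i) (set (take i ss)) > \<delta>) \<and>
     (\<forall>v\<in>U. \<not> (spdist_set E c v (set ss) > \<delta>))"

text \<open>Spanning trees on S in the metric closure (edges as ordered pairs, one per
  undirected edge): connected on S with |S|-1 edges.\<close>
definition spanning_tree_on :: "'a set \<Rightarrow> ('a \<times> 'a) set \<Rightarrow> bool" where
  "spanning_tree_on S F \<longleftrightarrow> F \<subseteq> S \<times> S \<and> (\<forall>(u, v)\<in>F. u \<noteq> v) \<and>
     (\<forall>u\<in>S. \<forall>v\<in>S. (u, v) \<in> (F \<union> F\<inverse>)\<^sup>*) \<and> card F = card S - 1"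

definition tree_cost :: "('a \<Rightarrow> 'a \<Rightarrow> real) \<Rightarrow> ('a \<times> 'a) set \<Rightarrow> real" where
  "tree_cost w F = (\<Sum>(u, v)\<in>F. w u v)"

definition is_mst :: "('a \<Rightarrow> 'a \<Rightarrow> real) \<Rightarrow> 'a set \<Rightarrow> ('a \<times> 'a) set \<Rightarrow> bool" where
  "is_mst w S F \<longleftrightarrow> spanning_tree_on S F \<and>
     (\<forall>F'. spanning_tree_on S F' \<longrightarrow> tree_cost w F \<le> tree_cost w F')"

end

theory Submission
  imports Defs "HOL-Library.Sublist"
begin


lemma walk_Nil[simp]: "\<not> walk F []" by (simp add: walk_def)
lemma walk_single[simp]: "walk F [x]" by (simp add: walk_def)
lemma walk_Cons2[simp]: "walk F (x#y#zs) = ({x,y}\<in>F \<and> walk F (y#zs))"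
  by (simp add: walk_def)
lemma walk_cost_single[simp]: "walk_cost c [x] = 0" by (simp add: walk_cost_def)
lemma walk_cost_Cons2[simp]: "walk_cost c (x#y#zs) = c{x,y} + walk_cost c (y#zs)"
  by (simp add: walk_cost_def)

lemma walk_append:
  "walk F xs \<Longrightarrow> walk F ys \<Longrightarrow> {last xs, hd ys} \<in> F \<Longrightarrow>
   walk F (xs @ ys) \<and> walk_cost c (xs@ys) = walk_cost c xs + c {last xs, hd ys} + walk_cost c ys"
proof (induction xs rule: induct_list012)
  case 1 then show ?case by simp
next
  case (2 x) then show ?case by (cases ys) auto
next
  case (3 x y zs) then show ?case by auto
qed

lemma walk_mono: "walk F xs \<Longrightarrow> F \<subseteq> G \<Longrightarrow> walk G xs"
  unfolding walk_def by auto

lemma walk_cost_nonneg: "walk F xs \<Longrightarrow> \<forall>e\<in>F. c e \<ge> 0 \<Longrightarrow> walk_cost c xs \<ge> 0"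
proof (induction xs rule: induct_list012)
  case (3 x y zs) then show ?case by auto
qed auto

lemma walk_rev: "walk F xs \<Longrightarrow> walk F (rev xs) \<and> walk_cost c (rev xs) = walk_cost c xs"
proof (induction xs rule: induct_list012)
  case (3 x y zs)
  then have w: "walk F (rev (y#zs))" and wc: "walk_cost c (rev (y#zs)) = walk_cost c (y#zs)"
    and e: "{x,y} \<in> F" by auto
  have "last (rev (y#zs)) = y" by simp
  then have "walk F (rev (y#zs) @ [x]) \<and> walk_cost c (rev (y#zs) @ [x]) = walk_cost c (rev (y#zs)) + c {y, x} + walk_cost c [x]"
    using walk_append[OF w, of "[x]" c] e by (simp add: insert_commute)
  then show ?case using wc by (simp add: insert_commute)
qed auto

lemma spdist_sym: "spdist E c u v = spdist E c v u"
proof -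
  have "{walk_cost c xs | xs. walk E xs \<and> hd xs = u \<and> last xs = v}
      = {walk_cost c xs | xs. walk E xs \<and> hd xs = v \<and> last xs = u}" (is "?A = ?B")
  proof
    show "?A \<subseteq> ?B"
    proof
      fix a assume "a \<in> ?A"
      then obtain xs where "a = walk_cost c xs" "walk E xs" "hd xs = u" "last xs = v" by blast
      then show "a \<in> ?B" using walk_rev[of E xs c]
        by (intro CollectI exI[of _ "rev xs"]) (auto simp: hd_rev last_rev)
    qed
  next
    show "?B \<subseteq> ?A"
    proof
      fix a assume "a \<in> ?B"
      then obtain xs where "a = walk_cost c xs" "walk E xs" "hd xs = v" "last xs = u" by blast
      then show "a \<in> ?A" using walk_rev[of E xs c]
        by (intro CollectI exI[of _ "rev xs"]) (auto simp: hd_rev last_rev)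
    qed
  qed
  then show ?thesis unfolding spdist_def by simp
qed

lemma spdist_le:
  assumes "\<forall>e\<in>E. c e \<ge> 0" "walk E xs"
  shows "spdist E c (hd xs) (last xs) \<le> walk_cost c xs"
  unfolding spdist_def
proof (rule cInf_lower)
  show "walk_cost c xs \<in> {walk_cost c ys |ys. walk E ys \<and> hd ys = hd xs \<and> last ys = last xs}"
    using assms by blast
  show "bdd_below {walk_cost c ys |ys. walk E ys \<and> hd ys = hd xs \<and> last ys = last xs}"
    using assms walk_cost_nonneg by (intro bdd_belowI[of _ 0]) blast
qed

lemma spdist_self:
  assumes "\<forall>e\<in>E. c e \<ge> 0"
  shows "spdist E c x x = 0"
  unfolding spdist_def
proof (rule cInf_eq_minimum)
  show "0 \<in> {walk_cost c ys |ys. walk E ys \<and> hd ys = x \<and> last ys = x}"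
    by (intro CollectI exI[of _ "[x]"]) simp
qed (use assms walk_cost_nonneg in blast)

definition reach :: "'a set set \<Rightarrow> 'a \<Rightarrow> 'a set" where
  "reach H u = {x. (u,x) \<in> (adj H)\<^sup>*}"

lemma adj_conv: "(adj H)\<inverse> = adj H"
  unfolding adj_def by (auto simp: insert_commute)

lemma rt_sym: "(x,y) \<in> (adj H)\<^sup>* \<Longrightarrow> (y,x) \<in> (adj H)\<^sup>*"
  using rtrancl_converseI[of x y "adj H"] adj_conv by metis

lemma adj_iff[simp]: "(x,y) \<in> adj H \<longleftrightarrow> {x,y} \<in> H"
  unfolding adj_def by simp

lemma tour:
  "finite H \<Longrightarrow> \<forall>e\<in>H. card e = 2 \<Longrightarrow> \<forall>e\<in>H. c e \<ge> 0 \<Longrightarrow>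
   \<exists>ws. walk H ws \<and> hd ws = u \<and> last ws = u \<and> reach H u \<subseteq> set ws \<and> walk_cost c ws \<le> 2 * sum c H"
proof (induction "card H" arbitrary: H u rule: less_induct)
  case less
  have sH: "sum c H \<ge> 0" using less.prems by (simp add: sum_nonneg)
  show ?case
  proof (cases "\<exists>e\<in>H. u \<in> e")
    case False
    have "reach H u \<subseteq> {u}"
    proof
      fix x assume "x \<in> reach H u"
      then have "(u,x) \<in> (adj H)\<^sup>*" by (simp add: reach_def)
      then show "x \<in> {u}"
        by (rule converse_rtranclE) (use False in auto)
    qed
    then show ?thesis using sH by (intro exI[of _ "[u]"]) auto
  next
    case True
    then obtain e where eH: "e \<in> H" and ue: "u \<in> e" by blast
    obtain a b where ab: "e = {a,b}" "a \<noteq> b" using less.prems(2) eH unfolding card_2_iff by blast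
    define v where "v = (if u = a then b else a)"
    have ev: "e = {u,v}" using ab ue by (auto simp: v_def)
    have uv: "u \<noteq> v" using ab ue by (auto simp: v_def)
    define H' where "H' = H - {e}"
    have cH': "card H' < card H" using eH less.prems(1) unfolding H'_def
      by (intro card_Diff1_less)
    have fH': "finite H'" using less.prems(1) by (simp add: H'_def)
    have sumH: "sum c H = c e + sum c H'"
      unfolding H'_def using less.prems(1) eH by (simp add: sum.remove)
    have ce: "c e \<ge> 0" using less.prems eH by auto
    show ?thesis
    proof (cases "v \<in> reach H' u")
      case True
      obtain ws where ws: "walk H' ws" "hd ws = u" "last ws = u" "reach H' u \<subseteq> set ws"
          "walk_cost c ws \<le> 2 * sum c H'"
        using less.hyps[OF cH' fH'] less.prems unfolding H'_def by (meson DiffD1)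
      have "reach H u \<subseteq> reach H' u"
      proof
        fix x assume "x \<in> reach H u"
        then have "(u,x) \<in> (adj H)\<^sup>*" by (simp add: reach_def)
        then show "x \<in> reach H' u"
        proof (induction rule: rtrancl_induct)
          case base then show ?case by (simp add: reach_def)
        next
          case (step y z)
          show ?case
          proof (cases "{y,z} \<in> H'")
            case True then show ?thesis using step
              by (auto simp: reach_def intro: rtrancl_into_rtrancl)
          next
            case False
            then have "{y,z} = {u,v}" using step(2) ev by (auto simp: H'_def)
            then have "z = u \<or> z = v" by (auto simp: doubleton_eq_iff)
            then show ?thesis using \<open>v \<in> reach H' u\<close> by (auto simp: reach_def)
          qed
        qed
      qed
      moreover have "walk H ws" using ws(1) walk_mono[of H' ws H] by (auto simp: H'_def)
      ultimately show ?thesis using ws sumH ce by (intro exI[of _ ws]) auto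
    next
      case False
      define Ru where "Ru = reach H' u"
      define Hu where "Hu = {f\<in>H'. f \<inter> Ru \<noteq> {}}"
      define Hv where "Hv = H' - Hu"
      have HuH: "Hu \<subseteq> H" and HvH: "Hv \<subseteq> H" unfolding Hu_def Hv_def H'_def by auto
      have fHu: "finite Hu" and fHv: "finite Hv" using fH' unfolding Hu_def Hv_def by auto
      have cHu: "card Hu < card H" using cH' card_mono[OF fH', of Hu] unfolding Hu_def by auto
      have cHv: "card Hv < card H" using cH' card_mono[OF fH', of Hv] unfolding Hv_def by auto
      obtain wu where wu: "walk Hu wu" "hd wu = u" "last wu = u" "reach Hu u \<subseteq> set wu"
          "walk_cost c wu \<le> 2 * sum c Hu"
        using less.hyps[OF cHu fHu, of u] less.prems HuH by blast
      obtain wv where wv: "walk Hv wv" "hd wv = v" "last wv = v" "reach Hv v \<subseteq> set wv"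
          "walk_cost c wv \<le> 2 * sum c Hv"
        using less.hyps[OF cHv fHv, of v] less.prems HvH by blast
      have c1: "Ru \<subseteq> reach Hu u"
      proof
        fix x assume "x \<in> Ru"
        then have "(u,x) \<in> (adj H')\<^sup>*" by (simp add: Ru_def reach_def)
        then show "x \<in> reach Hu u"
        proof (induction rule: rtrancl_induct)
          case base then show ?case by (simp add: reach_def)
        next
          case (step y z)
          then have "y \<in> Ru" by (simp add: Ru_def reach_def)
          then have "{y,z} \<in> Hu" using step(2) by (auto simp: Hu_def)
          then show ?case using step(3) by (auto simp: reach_def intro: rtrancl_into_rtrancl)
        qed
      qed
      have c2: "reach H' v \<subseteq> reach Hv v"
      proof
        fix x assume "x \<in> reach H' v"
        then have "(v,x) \<in> (adj H')\<^sup>*" by (simp add: reach_def)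
        then show "x \<in> reach Hv v"
        proof (induction rule: rtrancl_induct)
          case base then show ?case by (simp add: reach_def)
        next
          case (step y z)
          have vz: "(v,z) \<in> (adj H')\<^sup>*" using step(1,2) by (meson rtrancl_into_rtrancl)
          have "{y,z} \<notin> Hu"
          proof
            assume "{y,z} \<in> Hu"
            then obtain w where w: "w \<in> {y,z}" "w \<in> Ru" by (auto simp: Hu_def)
            then have "(v,w) \<in> (adj H')\<^sup>*" using step(1) vz by auto
            then have "(w,v) \<in> (adj H')\<^sup>*" by (rule rt_sym)
            moreover have "(u,w) \<in> (adj H')\<^sup>*" using w by (simp add: Ru_def reach_def)
            ultimately have "v \<in> reach H' u" by (auto simp: reach_def)
            then show False using False by simp
          qed
          then have "{y,z} \<in> Hv" using step(2) by (auto simp: Hv_def)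
          then show ?case using step(3) by (auto simp: reach_def intro: rtrancl_into_rtrancl)
        qed
      qed
      have c3: "reach H u \<subseteq> Ru \<union> reach H' v"
      proof
        fix x assume "x \<in> reach H u"
        then have "(u,x) \<in> (adj H)\<^sup>*" by (simp add: reach_def)
        then show "x \<in> Ru \<union> reach H' v"
        proof (induction rule: rtrancl_induct)
          case base then show ?case by (simp add: Ru_def reach_def)
        next
          case (step y z)
          show ?case
          proof (cases "{y,z} \<in> H'")
            case True then show ?thesis using step
              by (auto simp: Ru_def reach_def intro: rtrancl_into_rtrancl)
          next
            case False
            then have "{y,z} = {u,v}" using step(2) ev by (auto simp: H'_def)
            then have "z = u \<or> z = v" by (auto simp: doubleton_eq_iff)
            then show ?thesis by (auto simp: Ru_def reach_def)
          qed
        qed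
      qed
      have wuH: "walk H wu" using walk_mono[OF wu(1) HuH] .
      have wvH: "walk H wv" using walk_mono[OF wv(1) HvH] .
      have e1: "{v,u} \<in> H" using eH ev by (simp add: insert_commute)
      have A1: "walk H (wv @ [u]) \<and> walk_cost c (wv @ [u]) = walk_cost c wv + c {v,u} + 0"
        using walk_append[OF wvH walk_single[of H u], of c] wv e1 by simp
      have hdv: "hd (wv @ [u]) = v" using wv(1,2) by (cases wv) auto
      have luv: "{last wu, hd (wv @ [u])} \<in> H" using hdv wu(3) eH ev by simp
      have A2: "walk H (wu @ (wv @ [u])) \<and> walk_cost c (wu @ (wv @ [u])) =
         walk_cost c wu + c {last wu, hd (wv @ [u])} + walk_cost c (wv @ [u])"
        using walk_append[OF wuH conjunct1[OF A1] luv, of c] by blast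
      have cc1: "c {last wu, hd (wv @ [u])} = c e" using hdv wu(3) ev by simp
      have cc2: "c {v,u} = c e" using ev by (simp add: insert_commute)
      have HH: "H' = Hu \<union> Hv" "Hu \<inter> Hv = {}" unfolding Hu_def Hv_def by auto
      have sumH': "sum c H' = sum c Hu + sum c Hv"
        using sum.union_disjoint[OF fHu fHv HH(2), of c] HH(1) by simp
      have "reach H u \<subseteq> set (wu @ (wv @ [u]))" using c1 c2 c3 wu(4) wv(4) unfolding Ru_def
        by fastforce
      moreover have "hd (wu @ (wv @ [u])) = u" using wu(1,2) by (cases wu) auto
      moreover have "last (wu @ (wv @ [u])) = u" by simp
      moreover have "walk_cost c (wu @ (wv @ [u])) \<le> 2 * sum c H"
      proof -
        have "walk_cost c (wu @ (wv @ [u])) = walk_cost c wu + c e + (walk_cost c wv + c e + 0)"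
          using A1 A2 cc1 cc2 by simp
        then show ?thesis using wu(5) wv(5) sumH sumH' by linarith
      qed
      ultimately show ?thesis using A2 by blast
    qed
  qed
qed



definition pcost :: "'a set set \<Rightarrow> ('a set \<Rightarrow> real) \<Rightarrow> 'a list \<Rightarrow> real" where
  "pcost E c xl = sum_list (map (\<lambda>(a,b). spdist E c a b) (zip xl (tl xl)))"

lemma pcost_single[simp]: "pcost E c [x] = 0" by (simp add: pcost_def)
lemma pcost_Cons2[simp]: "pcost E c (x#y#zs) = spdist E c x y + pcost E c (y#zs)"
  by (simp add: pcost_def)

lemma path_bound:
  assumes nn: "\<forall>e\<in>E. c e \<ge> 0"
  shows "walk E ws \<Longrightarrow> subseq xl ws \<Longrightarrow> xl \<noteq> [] \<Longrightarrow> walk E p \<Longrightarrow> last p = hd ws \<Longrightarrow>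
         pcost E c (hd p # xl) \<le> walk_cost c p + walk_cost c ws"
proof (induction ws arbitrary: xl p rule: induct_list012)
  case 1 then show ?case by simp
next
  case (2 w)
  have "length xl \<le> 1" using list_emb_length[OF 2(2)] by simp
  then obtain x where "xl = [x]" using 2(3) by (cases xl) auto
  then have "xl = [w]" using 2(2) by (simp split: if_splits)
  then show ?case using spdist_le[OF nn \<open>walk E p\<close>] 2 by simp
next
  case (3 w w' rest)
  obtain b xl' where xl: "xl = b # xl'" using 3(5) by (cases xl) auto
  have wr: "walk E (w'#rest)" and ew: "{w,w'} \<in> E" using 3(3) by auto
  have nnw: "walk_cost c (w'#rest) \<ge> 0" using walk_cost_nonneg[OF wr nn] .
  have sp: "spdist E c (hd p) (last p) \<le> walk_cost c p" using spdist_le[OF nn \<open>walk E p\<close>] .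
  show ?case
  proof (cases "subseq xl (w'#rest)")
    case True
    have wp': "walk E (p @ [w'])" and cp': "walk_cost c (p @ [w']) = walk_cost c p + c {last p, w'} + 0"
      using walk_append[OF \<open>walk E p\<close> walk_single[of E w'], of c] ew 3(7) by auto
    have hp: "hd (p @ [w']) = hd p" using \<open>walk E p\<close> by (cases p) auto
    have "pcost E c (hd (p @ [w']) # xl) \<le> walk_cost c (p @ [w']) + walk_cost c (w'#rest)"
      using 3(2)[OF wr True 3(5) wp'] by simp
    then show ?thesis using hp cp' 3(7) by simp
  next
    case False
    then have bw: "b = w" and sx: "subseq xl' (w'#rest)" using 3(4) xl by (auto split: if_splits)
    show ?thesis
    proof (cases "xl' = []")
      case True
      then show ?thesis using xl bw sp 3(7) nnw ew nn by auto
    next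
      case False
      have "pcost E c (hd [w,w'] # xl') \<le> walk_cost c [w,w'] + walk_cost c (w'#rest)"
        using 3(2)[OF wr sx False, of "[w,w']"] ew by simp
      then have "pcost E c (w # xl') \<le> walk_cost c (w#w'#rest)" by simp
      moreover obtain b' xl'' where "xl' = b' # xl''" using False by (cases xl') auto
      ultimately show ?thesis using xl bw sp 3(7) by simp
    qed
  qed
qed

lemma subseq_remdups: "subseq (remdups xs) xs"
  by (induction xs) (auto intro: subseq_Cons2 list_emb_Cons)

lemma path_tree:
  assumes "distinct xl" "xl \<noteq> []"
  shows "spanning_tree_on (set xl) (set (zip xl (tl xl)))"
proof -
  let ?F = "set (zip xl (tl xl))"
  have sub: "?F \<subseteq> set xl \<times> set xl"
    using assms(2) by (auto dest: set_zip_leftD set_zip_rightD simp: list.set_sel(2))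
  have neq: "\<forall>(u,v)\<in>?F. u \<noteq> v"
  proof
    fix x assume "x \<in> ?F"
    then obtain i where i: "i < length xl - 1" "x = (xl!i, tl xl ! i)"
      by (auto simp: set_zip)
    then have "tl xl ! i = xl ! Suc i" by (simp add: nth_tl)
    moreover have "xl ! i \<noteq> xl ! Suc i" using assms(1) i(1)
      by (simp add: nth_eq_iff_index_eq)
    ultimately show "case x of (u,v) \<Rightarrow> u \<noteq> v" using i by simp
  qed
  have fw: "\<forall>u\<in>set xs. (hd xs, u) \<in> (set (zip xs (tl xs)))\<^sup>*" if "xs \<noteq> []" for xs :: "'a list"
    using that
  proof (induction xs rule: induct_list012)
    case (3 x y zs)
    have sb: "set (zip (y#zs) (tl (y#zs))) \<subseteq> set (zip (x#y#zs) (tl (x#y#zs)))" by auto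
    have "\<forall>u\<in>set (y#zs). (y, u) \<in> (set (zip (x#y#zs) (tl (x#y#zs))))\<^sup>*"
    proof
      fix u assume "u \<in> set (y#zs)"
      then have "(y,u) \<in> (set (zip (y#zs) (tl (y#zs))))\<^sup>*" using 3(2) by (cases "u = y") auto
      then show "(y, u) \<in> (set (zip (x#y#zs) (tl (x#y#zs))))\<^sup>*" using rtrancl_mono[OF sb] by blast
    qed
    moreover have "(x,y) \<in> set (zip (x#y#zs) (tl (x#y#zs)))" by simp
    ultimately show ?case by (auto intro: converse_rtrancl_into_rtrancl)
  qed auto
  have conn: "\<forall>u\<in>set xl. \<forall>v\<in>set xl. (u, v) \<in> (?F \<union> ?F\<inverse>)\<^sup>*"
  proof (intro ballI)
    fix u v assume u: "u \<in> set xl" and v: "v \<in> set xl"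
    have "(hd xl, u) \<in> ?F\<^sup>*" using fw[OF assms(2)] u by blast
    then have "(u, hd xl) \<in> (?F\<inverse>)\<^sup>*" by (rule rtrancl_converseI)
    then have 1: "(u, hd xl) \<in> (?F \<union> ?F\<inverse>)\<^sup>*" by (rule rtrancl_mono[THEN subsetD, rotated]) auto
    have "(hd xl, v) \<in> ?F\<^sup>*" using fw[OF assms(2)] v by blast
    then have 2: "(hd xl, v) \<in> (?F \<union> ?F\<inverse>)\<^sup>*" by (rule rtrancl_mono[THEN subsetD, rotated]) auto
    show "(u, v) \<in> (?F \<union> ?F\<inverse>)\<^sup>*" using 1 2 by (rule rtrancl_trans)
  qed
  have "card ?F = length (zip xl (tl xl))"
    by (rule distinct_card) (rule distinct_zipI1[OF assms(1)])
  also have "\<dots> = card (set xl) - 1" using assms(1) by (simp add: distinct_card)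
  finally have "card ?F = card (set xl) - 1" .
  then show ?thesis unfolding spanning_tree_on_def using sub neq conn by blast
qed

lemma path_tree_cost:
  assumes "distinct xl"
  shows "tree_cost (spdist E c) (set (zip xl (tl xl))) = pcost E c xl"
  unfolding tree_cost_def pcost_def
  by (rule sum_list_distinct_conv_sum_set[symmetric]) (rule distinct_zipI1[OF assms])

lemma tree_from_cover:
  assumes gr: "graph V E" and nn: "\<forall>e\<in>E. c e \<ge> 0" and HE: "H \<subseteq> E"
    and rS: "r \<in> S" and fS: "finite S" and Sr: "S \<subseteq> reach H r"
  shows "\<exists>F. spanning_tree_on S F \<and> tree_cost (spdist E c) F \<le> 2 * sum c H"
proof -
  have fE: "finite E" using gr unfolding graph_def
    by (meson Pow_iff finite_Pow_iff rev_finite_subset subsetI)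
  have fH: "finite H" using fE HE by (rule rev_finite_subset)
  have c2: "\<forall>e\<in>H. card e = 2" using gr HE unfolding graph_def by auto
  have nnH: "\<forall>e\<in>H. c e \<ge> 0" using nn HE by auto
  obtain ws where ws: "walk H ws" "hd ws = r" "last ws = r" "reach H r \<subseteq> set ws"
      "walk_cost c ws \<le> 2 * sum c H"
    using tour[OF fH c2 nnH] by blast
  have wE: "walk E ws" using walk_mono[OF ws(1) HE] .
  define L where "L = remdups (filter (\<lambda>x. x \<in> S \<and> x \<noteq> r) ws)"
  define xl where "xl = r # L"
  have wsc: "ws = r # tl ws" using ws(1,2) by (cases ws) auto
  have "filter (\<lambda>x. x \<in> S \<and> x \<noteq> r) ws = filter (\<lambda>x. x \<in> S \<and> x \<noteq> r) (tl ws)"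
    by (subst wsc) simp
  then have "subseq L (tl ws)" unfolding L_def
    by (metis subseq_filter_left subseq_order.trans subseq_remdups)
  then have sxl: "subseq xl ws" unfolding xl_def by (subst wsc) (rule subseq_Cons2)
  have dxl: "distinct xl" unfolding xl_def L_def by simp
  have setxl: "set xl = S" unfolding xl_def L_def using rS Sr ws(4) by auto
  have "pcost E c (hd [r] # xl) \<le> walk_cost c [r] + walk_cost c ws"
    using path_bound[OF nn wE sxl _ walk_single] ws(2) by (simp add: xl_def)
  moreover have "pcost E c (hd [r] # xl) = pcost E c xl"
    unfolding xl_def by (cases L) (auto simp: spdist_self[OF nn])
  ultimately have "pcost E c xl \<le> 2 * sum c H" using ws(5) by simp
  moreover have "spanning_tree_on S (set (zip xl (tl xl)))"
    using path_tree[OF dxl] setxl by (simp add: xl_def)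
  ultimately show ?thesis using path_tree_cost[OF dxl, of E c] by metis
qed



lemma union_bound:
  assumes "finite Ds" "\<forall>D\<in>Ds. finite (ED D) \<and> sum c (ED D) \<le> t \<and> (\<forall>e\<in>ED D. c e \<ge> (0::real))"
    "finite A" "\<forall>e\<in>A. c e \<ge> 0"
  shows "sum c (A \<union> \<Union>(ED ` Ds)) \<le> sum c A + real (card Ds) * t"
  using assms(1,2)
proof (induction Ds rule: finite_induct)
  case empty then show ?case by simp
next
  case (insert D Ds)
  let ?B = "A \<union> \<Union>(ED ` Ds)"
  have fB: "finite ?B" using insert assms(3) by auto
  have fD: "finite (ED D)" using insert by auto
  have eq: "A \<union> \<Union>(ED ` insert D Ds) = ?B \<union> ED D" by auto
  have "sum c (?B \<union> ED D) = sum c ?B + sum c (ED D) - sum c (?B \<inter> ED D)"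
    using sum_Un[OF fB fD] .
  moreover have "sum c (?B \<inter> ED D) \<ge> 0" using insert by (intro sum_nonneg) auto
  moreover have "sum c ?B \<le> sum c A + real (card Ds) * t" using insert by auto
  moreover have "sum c (ED D) \<le> t" using insert by auto
  ultimately show ?case using eq insert(1,2) by (simp add: algebra_simps)
qed

theorem mainTheorem17:
  fixes V :: "'a set" and E :: "'a set set" and c :: "'a set \<Rightarrow> real"
    and r :: 'a and U :: "'a set" and k :: nat and lam \<beta> T :: real
    and E0 :: "'a set set" and ED :: "'a set \<Rightarrow> 'a set set"
    and ss :: "'a list" and \<Phi>T :: "('a \<times> 'a) set"
  assumes "graph V E"
    and "\<forall>e\<in>E. c e \<ge> 0"
    and "r \<in> V" and "U \<subseteq> V"
    and "k \<ge> 1" and "k \<le> card U"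
    and "lam \<ge> 1"
    and "T \<ge> 0" and "\<beta> > 2"
    and "robust_optimal E c r U k lam E0 ED"
    and "greedy_net_run E c r U (\<beta> * T / real k) ss"
    and "is_mst (spdist E c) (set ss) \<Phi>T"
    and "T \<ge> second_stage_cost c U k ED"
  shows "tree_cost (spdist E c) \<Phi>T
           \<le> (2 * \<beta> / (\<beta> - 2)) * first_stage_cost c E0 + 2 * second_stage_cost c U k ED"
proof -
  note gr = assms(1) and nn = assms(2) and UV = assms(4) and k1 = assms(5) and kU = assms(6)
    and T0 = assms(8) and b2 = assms(9) and gre = assms(11) and mst = assms(12)
  define \<Phi> where "\<Phi> = first_stage_cost c E0"
  define TT where "TT = second_stage_cost c U k ED"
  define \<delta> where "\<delta> = \<beta> * T / real k"
  have TTT: "TT \<le> T" using assms(13) by (simp add: TT_def)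
  have fV: "finite V" using gr by (simp add: graph_def)
  have fU: "finite U" using fV UV by (rule rev_finite_subset)
  have fE: "finite E" using gr unfolding graph_def
    by (meson Pow_iff finite_Pow_iff rev_finite_subset subsetI)
  have feas: "robust_feasible E r U k E0 ED" using assms(10) by (simp add: robust_optimal_def)
  have E0E: "E0 \<subseteq> E" using feas by (simp add: robust_feasible_def)
  have edD: "\<And>D. D \<in> scenarios U k \<Longrightarrow> ED D \<subseteq> E \<and> (\<forall>v\<in>D. (v, r) \<in> (adj (E0 \<union> ED D))\<^sup>*)"
    using feas by (simp add: robust_feasible_def)
  have fsc: "finite (scenarios U k)" unfolding scenarios_def
    by (rule finite_subset[of _ "Pow U"]) (auto simp: fU)
  obtain D0 where D0: "D0 \<subseteq> U" "card D0 = k" using obtain_subset_with_card_n[OF kU] by metis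
  have D0s: "D0 \<in> scenarios U k" using D0 by (simp add: scenarios_def)
  have leTT: "\<And>D. D \<in> scenarios U k \<Longrightarrow> sum c (ED D) \<le> TT"
    unfolding TT_def second_stage_cost_def using fsc by (intro Max_ge) auto
  have nnD: "\<And>D. D \<in> scenarios U k \<Longrightarrow> \<forall>e\<in>ED D. c e \<ge> 0" using edD nn by blast
  have fED: "finite (ED D)" if "D \<in> scenarios U k" for D
    using edD[OF that] by (intro rev_finite_subset[OF fE]) blast
  have TT0: "TT \<ge> 0" using leTT[OF D0s] sum_nonneg[of "ED D0" c] nnD[OF D0s] by force
  have \<Phi>0: "\<Phi> \<ge> 0" unfolding \<Phi>_def first_stage_cost_def using E0E nn by (intro sum_nonneg) auto
  have fE0: "finite E0" using fE E0E by (rule rev_finite_subset)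
  have nnE0: "\<forall>e\<in>E0. c e \<ge> 0" using E0E nn by auto
  have ubound: "\<And>Ds. Ds \<subseteq> scenarios U k \<Longrightarrow> sum c (E0 \<union> \<Union>(ED ` Ds)) \<le> \<Phi> + real (card Ds) * TT"
  proof -
    fix Ds assume Ds: "Ds \<subseteq> scenarios U k"
    have "finite Ds" using Ds fsc rev_finite_subset by blast
    then show "sum c (E0 \<union> \<Union>(ED ` Ds)) \<le> \<Phi> + real (card Ds) * TT"
      unfolding \<Phi>_def first_stage_cost_def
      using union_bound[of Ds ED c TT E0] Ds leTT nnD fED fE0 nnE0 by blast
  qed
  have HsubE: "\<And>Ds. Ds \<subseteq> scenarios U k \<Longrightarrow> E0 \<union> \<Union>(ED ` Ds) \<subseteq> E"
    using E0E edD by blast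
  have reachD: "\<And>Ds D v. Ds \<subseteq> scenarios U k \<Longrightarrow> D \<in> Ds \<Longrightarrow> v \<in> D \<Longrightarrow> v \<in> reach (E0 \<union> \<Union>(ED ` Ds)) r"
  proof -
    fix Ds D v assume a: "Ds \<subseteq> scenarios U k" "D \<in> Ds" "v \<in> D"
    then have "(v, r) \<in> (adj (E0 \<union> ED D))\<^sup>*" using edD by blast
    moreover have "adj (E0 \<union> ED D) \<subseteq> adj (E0 \<union> \<Union>(ED ` Ds))" using a(2) unfolding adj_def by auto
    ultimately have "(v, r) \<in> (adj (E0 \<union> \<Union>(ED ` Ds)))\<^sup>*" using rtrancl_mono[THEN subsetD] by metis
    then show "v \<in> reach (E0 \<union> \<Union>(ED ` Ds)) r" unfolding reach_def by (simp add: rt_sym)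
  qed
  have rreach: "\<And>H. r \<in> reach H r" by (simp add: reach_def)
  have ssne: "ss \<noteq> []" and hdss: "hd ss = r"
    and G1: "\<forall>i\<in>{1..<length ss}. ss ! i \<in> U \<and> spdist_set E c (ss ! i) (set (take i ss)) > \<delta>"
    using gre by (simp_all add: greedy_net_run_def \<delta>_def)
  have \<delta>0: "\<delta> \<ge> 0" unfolding \<delta>_def using T0 b2 by simp
  have sep: "\<And>i j. i < j \<Longrightarrow> j < length ss \<Longrightarrow> spdist E c (ss!j) (ss!i) > \<delta>"
  proof -
    fix i j assume ij: "i < j" "j < length ss"
    then have "spdist_set E c (ss ! j) (set (take j ss)) > \<delta>" using G1 by auto
    moreover have "ss ! i \<in> set (take j ss)"
    proof -
      have "take j ss ! i = ss ! i" using ij by simp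
      moreover have "i < length (take j ss)" using ij by simp
      ultimately show ?thesis by (metis nth_mem)
    qed
    moreover have "set (take j ss) \<noteq> {}" using ij ssne by (cases ss) auto
    ultimately show "spdist E c (ss!j) (ss!i) > \<delta>"
      unfolding spdist_set_def by (simp add: Min_gr_iff)
  qed
  have dss: "distinct ss"
    unfolding distinct_conv_nth
  proof (intro allI impI)
    fix i j assume a: "i < length ss" "j < length ss" "i \<noteq> j"
    show "ss ! i \<noteq> ss ! j"
    proof
      assume eq: "ss ! i = ss ! j"
      have "spdist E c (ss!i) (ss!i) = 0" by (rule spdist_self[OF nn])
      moreover have "spdist E c (ss!i) (ss!i) > \<delta>"
      proof (cases "i < j")
        case True then show ?thesis using sep[OF True a(2)] eq by simp
      next
        case False then have "j < i" using a by simp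
        then show ?thesis using sep[OF _ a(1)] eq by simp
      qed
      ultimately show False using \<delta>0 by simp
    qed
  qed
  have pairsep: "\<And>u v. u \<in> set ss \<Longrightarrow> v \<in> set ss \<Longrightarrow> u \<noteq> v \<Longrightarrow> spdist E c u v > \<delta>"
  proof -
    fix u v assume a: "u \<in> set ss" "v \<in> set ss" "u \<noteq> v"
    obtain i where i: "i < length ss" "u = ss ! i" using a(1) by (metis in_set_conv_nth)
    obtain j where j: "j < length ss" "v = ss ! j" using a(2) by (metis in_set_conv_nth)
    have "i \<noteq> j" using i j a(3) by auto
    then show "spdist E c u v > \<delta>"
    proof (cases "i < j")
      case True then show ?thesis using sep[OF True j(1)] i j spdist_sym by metis
    next
      case False then have "j < i" using \<open>i \<noteq> j\<close> by simp
      then show ?thesis using sep[OF _ i(1)] i j by metis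
    qed
  qed
  define xs where "xs = tl ss"
  have ssxs: "ss = r # xs" using ssne hdss unfolding xs_def by (cases ss) auto
  have dxs: "distinct xs" and rxs: "r \<notin> set xs" using dss ssxs by (metis distinct.simps(2))+
  have xsU: "set xs \<subseteq> U"
  proof
    fix x assume "x \<in> set xs"
    then obtain i where i: "i < length xs" "x = xs ! i" by (metis in_set_conv_nth)
    then have "x = ss ! Suc i" "Suc i \<in> {1..<length ss}" using ssxs by auto
    then show "x \<in> U" using G1 by auto
  qed
  define g where "g = length xs div k"
  define D where "D j = set (take k (drop (j*k) xs))" for j
  have gk: "g * k \<le> length xs" unfolding g_def by (simp add: div_times_less_eq_dividend)
  have Dscen: "\<And>j. j < g \<Longrightarrow> D j \<in> scenarios U k"
  proof -
    fix j assume j: "j < g"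
    have "Suc j * k \<le> g * k" using j by (intro mult_le_mono1) simp
    then have "j*k + k \<le> length xs" using gk by simp
    then have "length (take k (drop (j*k) xs)) = k" by simp
    moreover have "distinct (take k (drop (j*k) xs))" using dxs by simp
    ultimately have "card (D j) = k" unfolding D_def by (metis distinct_card)
    moreover have "D j \<subseteq> U" unfolding D_def using xsU
      by (meson order.trans set_drop_subset set_take_subset)
    ultimately show "D j \<in> scenarios U k" by (simp add: scenarios_def)
  qed
  have take_union: "set (take (g'*k) xs) = (\<Union>j<g'. D j)" for g'
  proof (induction g')
    case 0 then show ?case by simp
  next
    case (Suc g')
    have "Suc g' * k = g'*k + k" by simp
    then have "take (Suc g' * k) xs = take (g'*k) xs @ take k (drop (g'*k) xs)"
      by (metis take_add)
    then show ?case using Suc by (simp add: D_def lessThan_Suc Un_commute)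
  qed
  define R where "R = set (drop (g*k) xs)"
  have cR: "card R < k"
  proof -
    have "card R \<le> length (drop (g*k) xs)" unfolding R_def by (rule card_length)
    also have "\<dots> = length xs - g * k" by simp
    also have "\<dots> = length xs mod k" unfolding g_def by (simp add: minus_div_mult_eq_mod)
    also have "\<dots> < k" using k1 by simp
    finally show ?thesis .
  qed
  have RU: "R \<subseteq> U" unfolding R_def using xsU by (meson order.trans set_drop_subset)
  have fR: "finite R" unfolding R_def by simp
  obtain DR where DR: "R \<subseteq> DR" "DR \<subseteq> U" "card DR = k"
  proof -
    have "card (U - R) = card U - card R" using card_Diff_subset[OF fR RU] .
    then have "k - card R \<le> card (U - R)" using kU by simp
    then obtain B where B: "B \<subseteq> U - R" "card B = k - card R" "finite B"
      using obtain_subset_with_card_n by metis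
    have "card (R \<union> B) = card R + card B" using B fR by (intro card_Un_disjoint) auto
    then have "card (R \<union> B) = k" using B cR by simp
    then show ?thesis using that[of "R \<union> B"] B RU by auto
  qed
  have DRs: "DR \<in> scenarios U k" using DR by (simp add: scenarios_def)
  define Ds1 where "Ds1 = D ` {..<g}"
  have Ds1s: "Ds1 \<subseteq> scenarios U k" unfolding Ds1_def using Dscen by auto
  have cDs1: "card Ds1 \<le> g" unfolding Ds1_def using card_image_le[of "{..<g}" D] by simp
  define H1 where "H1 = E0 \<union> \<Union>(ED ` Ds1)"
  define S1 where "S1 = insert r (set (take (g*k) xs))"
  have S1r: "S1 \<subseteq> reach H1 r"
  proof
    fix x assume "x \<in> S1"
    then have "x = r \<or> (\<exists>j<g. x \<in> D j)" unfolding S1_def using take_union[of g] by auto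
    then show "x \<in> reach H1 r"
    proof
      assume "x = r" then show ?thesis by (simp add: rreach)
    next
      assume "\<exists>j<g. x \<in> D j"
      then obtain j where "j < g" "x \<in> D j" by blast
      then show ?thesis unfolding H1_def using reachD[OF Ds1s, of "D j" x] by (simp add: Ds1_def)
    qed
  qed
  have cS1: "card S1 = g * k + 1"
  proof -
    have "r \<notin> set (take (g*k) xs)" using rxs by (meson in_set_takeD)
    moreover have "card (set (take (g*k) xs)) = g * k"
      using dxs gk by (simp add: distinct_card)
    ultimately show ?thesis unfolding S1_def by simp
  qed
  have S1ss: "S1 \<subseteq> set ss" unfolding S1_def using ssxs by (auto dest: in_set_takeD)
  obtain F1 where F1: "spanning_tree_on S1 F1" "tree_cost (spdist E c) F1 \<le> 2 * sum c H1"
    using tree_from_cover[OF gr nn _ _ _ S1r] HsubE[OF Ds1s] unfolding H1_def S1_def by auto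
  have F1a: "F1 \<subseteq> S1 \<times> S1"
    using F1(1) unfolding spanning_tree_on_def by (elim conjE) assumption
  have F1b: "\<forall>(u,v)\<in>F1. u \<noteq> v"
    using F1(1) unfolding spanning_tree_on_def by (elim conjE) assumption
  have lower: "real (card F1) * \<delta> \<le> tree_cost (spdist E c) F1"
    unfolding tree_cost_def
  proof (rule sum_bounded_below)
    fix p assume pF: "p \<in> F1"
    obtain u v where p0: "p = (u,v)" by (cases p)
    have p: "p = (u,v)" "u \<in> S1" "v \<in> S1" "u \<noteq> v"
      using pF p0 F1a F1b by auto
    then have "spdist E c u v > \<delta>" using pairsep S1ss by blast
    then show "\<delta> \<le> (case p of (u, v) \<Rightarrow> spdist E c u v)" using p by simp
  qed
  have cF1: "card F1 = g * k" using F1(1) cS1 unfolding spanning_tree_on_def by simp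
  have kpos: "real k > 0" using k1 by simp
  have "real (card F1) * \<delta> = real g * \<beta> * T" unfolding cF1 \<delta>_def using kpos by simp
  then have "real g * \<beta> * T \<le> 2 * (\<Phi> + real g * TT)"
    using lower F1(2) ubound[OF Ds1s] cDs1 TT0 unfolding H1_def
    by (smt (verit, best) mult_right_mono of_nat_le_iff)
  then have "real g * \<beta> * T \<le> 2 * \<Phi> + 2 * (real g * T)"
    using TTT by (smt (verit) mult_left_mono of_nat_0_le_iff)
  then have key0: "real g * T * (\<beta> - 2) \<le> 2 * \<Phi>" by (simp add: algebra_simps)
  have key: "real g * TT * (\<beta> - 2) \<le> 2 * \<Phi>"
  proof -
    have "real g * TT \<le> real g * T" using TTT by (simp add: mult_left_mono)
    then have "real g * TT * (\<beta> - 2) \<le> real g * T * (\<beta> - 2)" using b2 by (simp add: mult_right_mono)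
    then show ?thesis using key0 by simp
  qed
  define Ds2 where "Ds2 = insert DR Ds1"
  have Ds2s: "Ds2 \<subseteq> scenarios U k" unfolding Ds2_def using Ds1s DRs by auto
  have cDs2: "card Ds2 \<le> g + 1"
  proof -
    have "finite Ds1" unfolding Ds1_def by simp
    then have "card Ds2 \<le> card Ds1 + 1" unfolding Ds2_def by (simp add: card_insert_if)
    then show ?thesis using cDs1 by simp
  qed
  define H2 where "H2 = E0 \<union> \<Union>(ED ` Ds2)"
  have ssr: "set ss \<subseteq> reach H2 r"
  proof
    fix x assume "x \<in> set ss"
    then have "x = r \<or> x \<in> set (take (g*k) xs) \<or> x \<in> R" unfolding R_def using ssxs
      by (metis append_take_drop_id set_ConsD Un_iff set_append)
    then show "x \<in> reach H2 r"
    proof (elim disjE)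
      assume "x = r" then show ?thesis by (simp add: rreach)
    next
      assume "x \<in> set (take (g*k) xs)"
      then obtain j where "j < g" "x \<in> D j" using take_union[of g] by auto
      then show ?thesis unfolding H2_def using reachD[OF Ds2s, of "D j" x]
        by (simp add: Ds2_def Ds1_def)
    next
      assume "x \<in> R"
      then show ?thesis unfolding H2_def using reachD[OF Ds2s, of DR x] DR(1)
        by (auto simp: Ds2_def)
    qed
  qed
  obtain F2 where F2: "spanning_tree_on (set ss) F2" "tree_cost (spdist E c) F2 \<le> 2 * sum c H2"
    using tree_from_cover[OF gr nn HsubE[OF Ds2s] _ _ ssr[unfolded H2_def]] ssxs unfolding H2_def by auto
  have "tree_cost (spdist E c) \<Phi>T \<le> tree_cost (spdist E c) F2"
    using mst F2(1) unfolding is_mst_def by blast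
  also have "\<dots> \<le> 2 * (\<Phi> + real (card Ds2) * TT)"
  proof -
    have "sum c H2 \<le> \<Phi> + real (card Ds2) * TT" using ubound[OF Ds2s] unfolding H2_def .
    then have "2 * sum c H2 \<le> 2 * (\<Phi> + real (card Ds2) * TT)" by simp
    then show ?thesis using F2(2) by (rule order_trans[rotated])
  qed
  also have "\<dots> \<le> 2 * (\<Phi> + real (g + 1) * TT)"
    using cDs2 TT0 by (simp add: mult_right_mono)
  also have "\<dots> \<le> (2 * \<beta> / (\<beta> - 2)) * \<Phi> + 2 * TT"
  proof -
    have bp: "\<beta> - 2 > 0" using b2 by simp
    define q where "q = 2 * \<Phi> / (\<beta> - 2)"
    have 1: "real g * TT \<le> q" unfolding q_def using key bp by (simp add: pos_le_divide_eq)
    have 2: "(2 * \<beta> / (\<beta> - 2)) * \<Phi> = 2 * \<Phi> + 2 * q"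
      unfolding q_def using bp by (simp add: field_simps)
    have 3: "2 * (\<Phi> + real (g + 1) * TT) = 2*\<Phi> + 2*(real g * TT) + 2*TT"
      by (simp add: algebra_simps)
    show ?thesis unfolding 2 3 using 1 by linarith
  qed
  finally show ?thesis unfolding \<Phi>_def TT_def .
qed

end
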